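(* Let $p_1\in[0,1]$ and let $PG_n$ be the random pentagonal chain network described in the context. Then for every $n\geq 1$, $$\mathbb{E}\big(S(PG_{n})\big)=(60-20p_{1})n^{3}+(60p_{1}+7)n^{2}-(40p_{1}+7)n.$$
   Context: Random chain network $PG_n$: $PG_1$ is a $5$-cycle (pentagon). For $n\ge 1$, $PG_{n+1}$ is obtained from $PG_n$ by adding a new pentagon $O_{n+1}$ with vertices $x_1,x_2,x_3,x_4,x_5$ in cyclic (clockwise) order and adding one edge joining $x_1$ to a vertex $u_n$ of $PG_n$. The vertex $u_1$ is any vertex of $PG_1$ (all are equivalent). For $n\ge 2$, $u_n$ is a vertex of the last pentagon $O_n$ (whose vertex $x_1$ is the one joined to $u_{n-1}$): with probability $p_1$ one takes $u_n\in\{x_2,x_5\}$ of $O_n$ (the two neighbours of $x_1$ in $O_n$), and with probability $p_2=1-p_1$ one takes $u_n\in\{x_3,x_4\}$ of $O_n$ (the two vertices at distance $2$ from $x_1$ in $O_n$); $p_1,p_2$ do not depend on the step. Thus $PG_n$ has $5n$ vertices. For a graph $G$, $d(v)$ denotes the degree of vertex $v$ and $d(u,v)$ the shortest-path distance. The Schultz index is $S(G)=\sum_{\{u,v\}\subseteq V_G} \big(d(u)+d(v)\big)\,d(u,v)$, the sum over unordered pairs of distinct vertices. *)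

theory Defs
  imports Complex_Main
begin

text \<open>
  Pentagon O_(k+1) (1-based) is encoded by index k (0-based, k < n); its vertices
  x_1,...,x_5 are encoded as (k,0),...,(k,4) in cyclic order.
  The random choices are a list cs of length n-2: for 0-based pentagon k >= 2,
  vertex (k,0) (= x_1 of O_(k+1)) is joined to (k-1, cs!(k-2)), i.e. to u_k = x_(c+1) of O_k,
  where c = cs!(k-2) is in {1,2,3,4}.  For k = 1, (1,0) is joined to (0,0)
  (u_1 is an arbitrary vertex of PG_1; all are equivalent).
  Choice c in {1,4} (x_2 or x_5) has probability p1/2 each, c in {2,3} (x_3 or x_4)
  has probability p2/2 = (1-p1)/2 each; choices are independent.
\<close>

definition pg_vertices :: "nat \<Rightarrow> (nat \<times> nat) set" where
  "pg_vertices n = {(k, j). k < n \<and> j < 5}"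

definition pg_adj :: "nat \<Rightarrow> nat list \<Rightarrow> nat \<times> nat \<Rightarrow> nat \<times> nat \<Rightarrow> bool" where
  "pg_adj n cs a b \<longleftrightarrow> a \<in> pg_vertices n \<and> b \<in> pg_vertices n \<and>
     ((fst a = fst b \<and> (snd b = (snd a + 1) mod 5 \<or> snd a = (snd b + 1) mod 5))
      \<or> (fst b = 1 \<and> snd b = 0 \<and> a = (0, 0))
      \<or> (fst a = 1 \<and> snd a = 0 \<and> b = (0, 0))
      \<or> (fst b \<ge> 2 \<and> snd b = 0 \<and> a = (fst b - 1, cs ! (fst b - 2)))
      \<or> (fst a \<ge> 2 \<and> snd a = 0 \<and> b = (fst a - 1, cs ! (fst a - 2))))"

definition pg_edges :: "nat \<Rightarrow> nat list \<Rightarrow> ((nat \<times> nat) \<times> (nat \<times> nat)) set" where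
  "pg_edges n cs = {(a, b). pg_adj n cs a b}"

definition pg_deg :: "nat \<Rightarrow> nat list \<Rightarrow> nat \<times> nat \<Rightarrow> nat" where
  "pg_deg n cs v = card {w \<in> pg_vertices n. pg_adj n cs v w}"

definition pg_dist :: "nat \<Rightarrow> nat list \<Rightarrow> nat \<times> nat \<Rightarrow> nat \<times> nat \<Rightarrow> nat" where
  "pg_dist n cs u v = (LEAST k. (u, v) \<in> (pg_edges n cs) ^^ k)"

text \<open>Schultz index: sum over unordered pairs of distinct vertices
  (each unordered pair counted once = half the sum over ordered pairs).\<close>
definition pg_schultz :: "nat \<Rightarrow> nat list \<Rightarrow> real" where
  "pg_schultz n cs = (1/2) * (\<Sum>u\<in>pg_vertices n. \<Sum>v\<in>pg_vertices n - {u}.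
      real ((pg_deg n cs u + pg_deg n cs v) * pg_dist n cs u v))"

definition choice_prob :: "real \<Rightarrow> nat \<Rightarrow> real" where
  "choice_prob p1 c = (if c = 1 \<or> c = 4 then p1 / 2 else (1 - p1) / 2)"

definition choice_seqs :: "nat \<Rightarrow> nat list set" where
  "choice_seqs n = {cs. length cs = n - 2 \<and> set cs \<subseteq> {1, 2, 3, 4}}"

definition expected_schultz :: "real \<Rightarrow> nat \<Rightarrow> real" where
  "expected_schultz p1 n =
     (\<Sum>cs\<in>choice_seqs n. (\<Prod>c\<leftarrow>cs. choice_prob p1 c) * pg_schultz n cs)"

end

theory Submission
  imports Defs
begin


definition ocs :: "nat list \<Rightarrow> nat \<Rightarrow> nat" where
  "ocs cs m = (if m = 0 then 0 else cs ! (m - 1))"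
definition cyc :: "nat \<Rightarrow> nat \<Rightarrow> nat" where
  "cyc a b = min ((a + 5 - b) mod 5) ((b + 5 - a) mod 5)"
definition LL :: "(nat \<Rightarrow> nat) \<Rightarrow> nat \<Rightarrow> int" where
  "LL g k = (\<Sum>m<k. int (cyc 0 (g m)) + 1)"
fun FF :: "(nat \<Rightarrow> nat) \<Rightarrow> nat \<times> nat \<Rightarrow> nat \<times> nat \<Rightarrow> int" where
  "FF g (i,a) (j,b) = (if i = j then int (cyc a b)
     else if i < j then int (cyc a (g i)) - int (cyc 0 (g i)) + LL g j - LL g i + int (cyc 0 b)
     else int (cyc b (g j)) - int (cyc 0 (g j)) + LL g i - LL g j + int (cyc 0 a))"
definition adjg :: "nat \<Rightarrow> (nat \<Rightarrow> nat) \<Rightarrow> nat \<times> nat \<Rightarrow> nat \<times> nat \<Rightarrow> bool" where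
  "adjg n g a b \<longleftrightarrow> a \<in> pg_vertices n \<and> b \<in> pg_vertices n \<and>
     ((fst a = fst b \<and> (snd b = (snd a + 1) mod 5 \<or> snd a = (snd b + 1) mod 5))
      \<or> (fst b \<ge> 1 \<and> snd b = 0 \<and> a = (fst b - 1, g (fst b - 1)))
      \<or> (fst a \<ge> 1 \<and> snd a = 0 \<and> b = (fst a - 1, g (fst a - 1))))"
definition Eg :: "nat \<Rightarrow> (nat \<Rightarrow> nat) \<Rightarrow> ((nat \<times> nat) \<times> (nat \<times> nat)) set" where
  "Eg n g = {(a,b). adjg n g a b}"
definition valid :: "nat \<Rightarrow> (nat \<Rightarrow> nat) \<Rightarrow> bool" where
  "valid n g \<longleftrightarrow> (\<forall>m. m + 1 < n \<longrightarrow> g m < 5)"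

lemma adj_eq: "pg_adj n cs a b = adjg n (ocs cs) a b"
  unfolding pg_adj_def adjg_def ocs_def
  by (cases a; cases b) (auto simp: numeral_2_eq_2)

lemma edges_eq: "pg_edges n cs = Eg n (ocs cs)"
  unfolding pg_edges_def Eg_def using adj_eq by auto

lemma valid_ocs: "cs \<in> choice_seqs n \<Longrightarrow> valid n (ocs cs)"
  unfolding valid_def ocs_def choice_seqs_def
proof (intro allI impI)
  fix m assume h: "cs \<in> {cs. length cs = n - 2 \<and> set cs \<subseteq> {1, 2, 3, 4}}" "m + 1 < n"
  show "(if m = 0 then 0 else cs ! (m - 1)) < 5"
  proof (cases "m = 0")
    case False
    then have "cs ! (m - 1) \<in> set cs" using h by auto
    then have "cs ! (m - 1) \<in> {1,2,3,4}" using h by blast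
    then show ?thesis using False by auto
  qed simp
qed

lemma cyc_sym: "cyc a b = cyc b a" by (simp add: cyc_def min.commute)
lemma cyc_self[simp]: "cyc a a = 0" by (simp add: cyc_def)

lemma five_cases: "(a::nat) < 5 \<Longrightarrow> a = 0 \<or> a = 1 \<or> a = 2 \<or> a = 3 \<or> a = 4" by auto

lemma cyc_lip: "a < 5 \<Longrightarrow> x < 5 \<Longrightarrow> y < 5 \<Longrightarrow> y = (x+1) mod 5 \<or> x = (y+1) mod 5 \<Longrightarrow>
   cyc a y \<le> cyc a x + 1"
  apply (drule five_cases, drule five_cases, drule five_cases)
  apply (elim disjE) apply (auto simp: cyc_def)
  done

lemma LL_Suc: "LL g (Suc k) = LL g k + int (cyc 0 (g k)) + 1" by (simp add: LL_def)
lemma LL_mono: "i \<le> j \<Longrightarrow> LL g i \<le> LL g j"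
proof (induction j)
  case (Suc j) then show ?case by (cases "i = Suc j") (auto simp: LL_Suc)
qed simp

lemma FF_self[simp]: "FF g u u = 0" by (cases u) simp
lemma FF_sym: "FF g u v = FF g v u" by (cases u; cases v) (auto simp: cyc_sym)
lemma FF_nonneg: "FF g u v \<ge> 0"
proof -
  obtain i a j b where uv: "u = (i,a)" "v = (j,b)" by (cases u; cases v)
  have h: "i < j \<Longrightarrow> LL g i + int (cyc 0 (g i)) + 1 \<le> LL g j" for i j
    using LL_mono[of "Suc i" j g] by (simp add: LL_Suc)
  show ?thesis unfolding uv using h[of i j] h[of j i] by auto
qed

lemma bridge_up: "i \<le> m \<Longrightarrow> FF g (i,a) (Suc m, 0) = FF g (i,a) (m, g m) + 1"
  by (cases "i = m") (auto simp: LL_Suc cyc_sym)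
lemma bridge_down: "m < i \<Longrightarrow> FF g (i,a) (m, g m) = FF g (i,a) (Suc m, 0) + 1"
  by (cases "i = Suc m") (auto simp: LL_Suc cyc_sym)

lemma lip: assumes "adjg n g w v" "valid n g" "u \<in> pg_vertices n"
  shows "FF g u v \<le> FF g u w + 1"
proof -
  obtain i a k x k' y where e: "u = (i,a)" "w = (k,x)" "v = (k',y)" by (cases u; cases w; cases v)
  have ia: "i < n" "a < 5" using assms(3) e by (auto simp: pg_vertices_def)
  have kx: "k < n" "x < 5" "k' < n" "y < 5" using assms(1) e by (auto simp: adjg_def pg_vertices_def)
  from assms(1) e consider (c) "k = k'" "y = (x+1) mod 5 \<or> x = (y+1) mod 5"
    | (b1) "k' \<ge> 1" "y = 0" "k = k' - 1" "x = g (k' - 1)"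
    | (b2) "k \<ge> 1" "x = 0" "k' = k - 1" "y = g (k - 1)"
    unfolding adjg_def by auto
  then show ?thesis
  proof cases
    case c
    have l1: "cyc a y \<le> cyc a x + 1" using cyc_lip[OF ia(2) kx(2) kx(4) c(2)] .
    have l2: "cyc 0 y \<le> cyc 0 x + 1" using cyc_lip[OF _ kx(2) kx(4) c(2)] by simp
    show ?thesis
    proof (cases "i = k")
      case True then show ?thesis using e c l1 by simp
    next
      case False
      show ?thesis
      proof (cases "i < k")
        case True then show ?thesis using e c l2 by simp
      next
        case False2: False
        then have "k + 1 < n" using False ia by simp
        then have gk: "g k < 5" using assms(2) by (simp add: valid_def)
        have "cyc (g k) y \<le> cyc (g k) x + 1" using cyc_lip[OF gk kx(2) kx(4) c(2)] .
        then show ?thesis using e c False False2 by (simp add: cyc_sym)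
      qed
    qed
  next
    case b1
    then obtain m where m: "k' = Suc m" "k = m" by (cases k') auto
    show ?thesis
    proof (cases "i \<le> m")
      case True then show ?thesis using bridge_up[OF True, of g a] e b1 m by simp
    next
      case False then show ?thesis using bridge_down[of m i g a] e b1 m by simp
    qed
  next
    case b2
    then obtain m where m: "k = Suc m" "k' = m" by (cases k) auto
    show ?thesis
    proof (cases "i \<le> m")
      case True then show ?thesis using bridge_up[OF True, of g a] e b2 m by simp
    next
      case False then show ?thesis using bridge_down[of m i g a] e b2 m by simp
    qed
  qed
qed

lemma lower: assumes "valid n g" "u \<in> pg_vertices n"
  shows "(u,v) \<in> Eg n g ^^ m \<Longrightarrow> FF g u v \<le> int m"
proof (induction m arbitrary: v)
  case 0 then show ?case by simp
next
  case (Suc m)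
  then obtain w where "(u,w) \<in> Eg n g ^^ m" "(w,v) \<in> Eg n g" by (auto elim: relpow_Suc_E)
  then show ?case using Suc.IH lip[OF _ assms, of w v] by (fastforce simp: Eg_def)
qed



lemma Eg_sym: "(a,b) \<in> Eg n g \<Longrightarrow> (b,a) \<in> Eg n g"
  unfolding Eg_def adjg_def by auto

lemma relpow_sym: "(a,b) \<in> Eg n g ^^ m \<Longrightarrow> (b,a) \<in> Eg n g ^^ m"
proof (induction m arbitrary: b)
  case 0 then show ?case by simp
next
  case (Suc m)
  then obtain w where "(a,w) \<in> Eg n g ^^ m" "(w,b) \<in> Eg n g" by (auto elim: relpow_Suc_E)
  then show ?case using Suc.IH Eg_sym by (blast intro: relpow_Suc_I2)
qed

lemma cyc_step: "k < n \<Longrightarrow> x < 5 \<Longrightarrow> ((k,x),(k,(x+1) mod 5)) \<in> Eg n g"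
  unfolding Eg_def adjg_def pg_vertices_def by auto

lemma cyc_path: "k < n \<Longrightarrow> x < 5 \<Longrightarrow> ((k,x),(k,(x+m) mod 5)) \<in> Eg n g ^^ m"
proof (induction m)
  case 0 then show ?case by simp
next
  case (Suc m)
  have "((k,(x+m) mod 5),(k,((x+m) mod 5+1) mod 5)) \<in> Eg n g"
    using cyc_step[OF Suc.prems(1), of "(x+m) mod 5"] by simp
  moreover have "((x+m) mod 5+1) mod 5 = (x + Suc m) mod 5" by (simp add: mod_Suc_eq)
  ultimately show ?case using Suc by (auto intro: relpow_Suc_I)
qed

lemma in_path: assumes "k < n" "a < 5" "b < 5"
  shows "((k,a),(k,b)) \<in> Eg n g ^^ cyc a b"
proof -
  have e1: "(a + (b+5-a) mod 5) mod 5 = b" and e2: "(b + (a+5-b) mod 5) mod 5 = a"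
    using five_cases[OF assms(2)] five_cases[OF assms(3)] by auto
  have p1: "((k,a),(k,b)) \<in> Eg n g ^^ ((b+5-a) mod 5)" using cyc_path[OF assms(1,2), of "(b+5-a) mod 5" g] e1 by simp
  have p2: "((k,a),(k,b)) \<in> Eg n g ^^ ((a+5-b) mod 5)" using relpow_sym[OF cyc_path[OF assms(1,3), of "(a+5-b) mod 5" g]] e2 by simp
  show ?thesis using p1 p2 unfolding cyc_def min_def by auto
qed

lemma bridge_edge: "Suc m < n \<Longrightarrow> g m < 5 \<Longrightarrow> ((m, g m),(Suc m, 0)) \<in> Eg n g"
  unfolding Eg_def adjg_def pg_vertices_def by auto

lemma chain: assumes "valid n g" "Suc i + d < n"
  shows "\<exists>l. ((i, g i),(Suc i + d, 0)) \<in> Eg n g ^^ l \<and> int l = LL g (Suc i + d) - LL g i - int (cyc 0 (g i))"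
  using assms(2)
proof (induction d)
  case 0
  have "g i < 5" using assms(1) 0 by (simp add: valid_def)
  then have "((i, g i),(Suc i, 0)) \<in> Eg n g ^^ 1" using bridge_edge 0 by simp
  then show ?case by (intro exI[of _ 1]) (simp add: LL_Suc)
next
  case (Suc d)
  let ?j = "Suc i + d"
  obtain l where l: "((i, g i),(?j, 0)) \<in> Eg n g ^^ l" "int l = LL g ?j - LL g i - int (cyc 0 (g i))"
    using Suc by auto
  have gj: "g ?j < 5" using assms(1) Suc.prems by (simp add: valid_def)
  have p: "((?j,0),(?j, g ?j)) \<in> Eg n g ^^ cyc 0 (g ?j)" using in_path[of ?j n 0 "g ?j" g] Suc.prems gj by simp
  have b: "((?j, g ?j),(Suc ?j, 0)) \<in> Eg n g ^^ 1" using bridge_edge[of ?j n g] Suc.prems gj by simp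
  have "((i, g i),(Suc ?j, 0)) \<in> Eg n g ^^ (l + cyc 0 (g ?j) + 1)"
    using l(1) p b unfolding relpow_add by blast
  then show ?case using l(2) by (intro exI[of _ "l + cyc 0 (g ?j) + 1"]) (simp add: LL_Suc)
qed

lemma upper_lt: assumes "valid n g" "i < j" "j < n" "a < 5" "b < 5"
  shows "((i,a),(j,b)) \<in> Eg n g ^^ nat (FF g (i,a) (j,b))"
proof -
  obtain d where d: "j = Suc i + d" using assms(2) less_iff_Suc_add by auto
  obtain l where l: "((i, g i),(j, 0)) \<in> Eg n g ^^ l" "int l = LL g j - LL g i - int (cyc 0 (g i))"
    using chain[OF assms(1), of i d] d assms(3) by auto
  have gi: "g i < 5" using assms by (simp add: valid_def)
  have p1: "((i,a),(i, g i)) \<in> Eg n g ^^ cyc a (g i)" using in_path assms gi by simp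
  have p2: "((j,0),(j, b)) \<in> Eg n g ^^ cyc 0 b" using in_path assms by simp
  have "((i,a),(j,b)) \<in> Eg n g ^^ (cyc a (g i) + l + cyc 0 b)"
    using p1 l(1) p2 unfolding relpow_add by blast
  moreover have "nat (FF g (i,a) (j,b)) = cyc a (g i) + l + cyc 0 b" using l(2) assms(2) by simp
  ultimately show ?thesis by simp
qed

lemma upper: assumes "valid n g" "u \<in> pg_vertices n" "v \<in> pg_vertices n"
  shows "(u,v) \<in> Eg n g ^^ nat (FF g u v)"
proof -
  obtain i a j b where e: "u = (i,a)" "v = (j,b)" by (cases u; cases v)
  have r: "i < n" "a < 5" "j < n" "b < 5" using assms e by (auto simp: pg_vertices_def)
  consider "i < j" | "i = j" | "j < i" by arith
  then show ?thesis
  proof cases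
    case 1 then show ?thesis using upper_lt[OF assms(1) 1] r e by simp
  next
    case 2 then show ?thesis using in_path[of i n a b g] r e by simp
  next
    case 3 then show ?thesis using relpow_sym[OF upper_lt[OF assms(1) 3 r(1) r(4) r(2)]] r e FF_sym[of g u v] by simp
  qed
qed

lemma dist_eq: assumes "cs \<in> choice_seqs n" "u \<in> pg_vertices n" "v \<in> pg_vertices n"
  shows "pg_dist n cs u v = nat (FF (ocs cs) u v)"
proof -
  have va: "valid n (ocs cs)" using valid_ocs[OF assms(1)] .
  show ?thesis unfolding pg_dist_def edges_eq
  proof (rule Least_equality)
    show "(u, v) \<in> Eg n (ocs cs) ^^ nat (FF (ocs cs) u v)" using upper[OF va assms(2,3)] .
  next
    fix m assume "(u, v) \<in> Eg n (ocs cs) ^^ m"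
    then show "nat (FF (ocs cs) u v) \<le> m" using lower[OF va assms(2)] by fastforce
  qed
qed



definition dg :: "nat \<Rightarrow> (nat \<Rightarrow> nat) \<Rightarrow> nat \<times> nat \<Rightarrow> nat" where
  "dg n g u = 2 + (if 1 \<le> fst u \<and> snd u = 0 then 1 else 0) + (if fst u + 1 < n \<and> snd u = g (fst u) then 1 else 0)"

lemma back5: assumes "(j::nat) < 5" "y < 5" shows "(j = (y+1) mod 5 \<longleftrightarrow> y = (j+4) mod 5)"
  using five_cases[OF assms(1)] five_cases[OF assms(2)] by (elim disjE) simp_all

lemma adj_char: fixes k j k' y :: nat shows "adjg n g (k,j) (k',y) \<longleftrightarrow> k < n \<and> j < 5 \<and> k' < n \<and> y < 5 \<and>
   ((k = k' \<and> (y = (j+1) mod 5 \<or> y = (j+4) mod 5)) \<or> (k' = k+1 \<and> y = 0 \<and> j = g k)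
    \<or> (1 \<le> k \<and> j = 0 \<and> k' = k-1 \<and> y = g (k-1)))"
proof -
  have "adjg n g (k,j) (k',y) \<longleftrightarrow> k < n \<and> j < 5 \<and> k' < n \<and> y < 5 \<and>
   ((k = k' \<and> (y = (j+1) mod 5 \<or> j = (y+1) mod 5)) \<or> (k' \<ge> 1 \<and> y = 0 \<and> k = k' - 1 \<and> j = g (k'-1))
    \<or> (1 \<le> k \<and> j = 0 \<and> k' = k-1 \<and> y = g (k-1)))"
    unfolding adjg_def pg_vertices_def by auto
  also have "\<dots> \<longleftrightarrow> k < n \<and> j < 5 \<and> k' < n \<and> y < 5 \<and>
   ((k = k' \<and> (y = (j+1) mod 5 \<or> y = (j+4) mod 5)) \<or> (k' = k+1 \<and> y = 0 \<and> j = g k)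
    \<or> (1 \<le> k \<and> j = 0 \<and> k' = k-1 \<and> y = g (k-1)))"
  proof (cases "j < 5 \<and> y < 5")
    case True
    have eq2: "(k' \<ge> 1 \<and> y = 0 \<and> k = k' - 1 \<and> j = g (k'-1)) \<longleftrightarrow> (k' = k+1 \<and> y = 0 \<and> j = g k)"
      by (cases k') auto
    show ?thesis unfolding eq2 back5[of j y, OF True[THEN conjunct1] True[THEN conjunct2]] by (rule refl)
  qed auto
  finally show ?thesis .
qed

lemma nbrs: assumes "valid n g" "k < n" "j < 5"
  shows "{w \<in> pg_vertices n. adjg n g (k,j) w} =
    {(k,(j+1) mod 5),(k,(j+4) mod 5)} \<union> (if 1 \<le> k \<and> j = 0 then {(k-1, g(k-1))} else {})
      \<union> (if k+1 < n \<and> j = g k then {(k+1,0)} else {})"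
proof -
  have gk: "1 \<le> k \<Longrightarrow> g (k-1) < 5" using assms by (simp add: valid_def)
  show ?thesis
  proof (rule set_eqI)
    fix w :: "nat \<times> nat"
    obtain k' y where w: "w = (k',y)" by (cases w)
    show "w \<in> {w \<in> pg_vertices n. adjg n g (k,j) w} \<longleftrightarrow> w \<in> {(k,(j+1) mod 5),(k,(j+4) mod 5)} \<union> (if 1 \<le> k \<and> j = 0 then {(k-1, g(k-1))} else {})
      \<union> (if k+1 < n \<and> j = g k then {(k+1,0)} else {})"
      unfolding w using assms gk by (auto simp: adj_char pg_vertices_def)
  qed
qed

lemma deg_eq: assumes "cs \<in> choice_seqs n" "u \<in> pg_vertices n"
  shows "pg_deg n cs u = dg n (ocs cs) u"
proof -
  obtain k j where u: "u = (k,j)" by (cases u)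
  have r: "k < n" "j < 5" using assms(2) u by (auto simp: pg_vertices_def)
  have ne: "(j+1) mod 5 \<noteq> (j+4) mod 5" using five_cases[OF r(2)] by (elim disjE) simp_all
  have "pg_deg n cs u = card ({(k,(j+1) mod 5),(k,(j+4) mod 5)} \<union> (if 1 \<le> k \<and> j = 0 then {(k-1, ocs cs (k-1))} else {})
      \<union> (if k+1 < n \<and> j = ocs cs k then {(k+1,0)} else {}))"
    unfolding pg_deg_def adj_eq u using nbrs[OF valid_ocs[OF assms(1)] r] by simp
  also have "\<dots> = dg n (ocs cs) u"
    using ne unfolding dg_def u
    by (cases "1 \<le> k \<and> j = 0"; cases "k+1 < n \<and> j = ocs cs k") (auto simp: card_insert_if)
  finally show ?thesis .
qed



lemma VS: "pg_vertices n = {..<n} \<times> {..<5}" by (auto simp: pg_vertices_def)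
lemma finV[simp]: "finite (pg_vertices n)" by (simp add: VS)
lemma sumV: "sum f (pg_vertices n) = (\<Sum>k<n. \<Sum>j<5. f (k,j))"
  by (simp add: VS sum.cartesian_product)
lemma sumV_Suc: "sum f (pg_vertices (Suc n)) = sum f (pg_vertices n) + (\<Sum>j<5. f (n,j))"
  by (simp add: sumV)
lemma sum5: "(\<Sum>j<(5::nat). f j) = f 0 + f 1 + f 2 + f 3 + (f 4 :: 'a::comm_monoid_add)"
  by (simp add: numeral_eq_Suc add.assoc)
lemma cardV: "card (pg_vertices n) = 5*n" by (simp add: VS card_cartesian_product)

lemma cyc_vals: "cyc 0 0 = 0" "cyc 0 1 = 1" "cyc 0 2 = 2" "cyc 0 3 = 2" "cyc 0 4 = 1"
  "cyc 1 0 = 1" "cyc 2 0 = 2" "cyc 3 0 = 2" "cyc 4 0 = 1"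
  by (simp_all add: cyc_def min_def)

lemma cyc_sum: assumes "c < 5" shows "(\<Sum>a<5. int (cyc a c)) = 6"
  unfolding sum5 using five_cases[OF assms] by (elim disjE) (simp_all add: cyc_def)
lemma cyc_sum2: "c < 5 \<Longrightarrow> (\<Sum>a<5. (if a = 0 then 1 else 0) * int (cyc a c)) = int (cyc 0 c)"
  unfolding sum5 by simp
lemma cyc_sum0: "(\<Sum>a<5. int (cyc 0 a)) = 6"
  unfolding sum5 by (simp add: cyc_def)

lemma dg_Suc: "k < Suc m \<Longrightarrow> dg (Suc (Suc m)) g (k,j) = dg (Suc m) g (k,j) + (if (k,j) = (m, g m) then 1 else 0)"
  by (auto simp: dg_def)
lemma dg_last: "dg (Suc (Suc m)) g (Suc m, j) = 2 + (if j = 0 then 1 else 0)"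
  by (simp add: dg_def)
lemma dg_last1: "dg (Suc m) g (m, j) = 2 + (if 1 \<le> m \<and> j = 0 then 1 else 0)"
  by (simp add: dg_def)
lemma FF_new: "k < Suc m \<Longrightarrow> FF g (k,j) (Suc m, b) = FF g (k,j) (m, g m) + 1 + int (cyc 0 b)"
proof -
  assume k: "k < Suc m"
  have "FF g (k,j) (Suc m, b) = FF g (k,j) (Suc m, 0) + int (cyc 0 b)" using k by simp
  then show ?thesis using bridge_up[of k m g j] k by simp
qed
lemma FF_last: "k < m \<Longrightarrow> FF g (k,j) (m, c) = FF g (k,j) (m, 0) + int (cyc 0 c)"
  by simp

lemma sumdg: "(\<forall>k<m. g k < 5) \<Longrightarrow> (\<Sum>u\<in>pg_vertices (Suc m). int (dg (Suc m) g u)) = 12 * int (Suc m) - 2"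
proof (induction m)
  case 0 then show ?case by (simp add: sumV sum5 dg_def)
next
  case (Suc m)
  have gm: "g m < 5" using Suc.prems by simp
  have wV: "(m, g m) \<in> pg_vertices (Suc m)" using gm by (simp add: pg_vertices_def)
  have "(\<Sum>u\<in>pg_vertices (Suc m). int (dg (Suc (Suc m)) g u))
      = (\<Sum>u\<in>pg_vertices (Suc m). int (dg (Suc m) g u) + (if u = (m, g m) then 1 else 0))"
  proof (rule sum.cong)
    fix u assume "u \<in> pg_vertices (Suc m)"
    then show "int (dg (Suc (Suc m)) g u) = int (dg (Suc m) g u) + (if u = (m, g m) then 1 else 0)"
      by (cases u) (auto simp: pg_vertices_def dg_Suc)
  qed simp
  also have "\<dots> = 12 * int (Suc m) - 2 + 1"
    using Suc wV by (simp add: sum.distrib sum.delta)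
  finally have a: "(\<Sum>u\<in>pg_vertices (Suc m). int (dg (Suc (Suc m)) g u)) = 12 * int (Suc m) - 1" by simp
  have b: "(\<Sum>j<5. int (dg (Suc (Suc m)) g (Suc m, j))) = 11" by (simp add: dg_last sum5)
  show ?case unfolding sumV_Suc[of _ "Suc m"] a b by simp
qed



definition TT :: "nat \<Rightarrow> (nat \<Rightarrow> nat) \<Rightarrow> int" where
  "TT n g = (\<Sum>u\<in>pg_vertices n. \<Sum>v\<in>pg_vertices n. int (dg n g u) * FF g u v)"
definition AA :: "nat \<Rightarrow> (nat \<Rightarrow> nat) \<Rightarrow> int" where
  "AA n g = (\<Sum>v\<in>pg_vertices n. FF g v (n-1, 0))"
definition BB :: "nat \<Rightarrow> (nat \<Rightarrow> nat) \<Rightarrow> int" where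
  "BB n g = (\<Sum>u\<in>pg_vertices n. int (dg n g u) * FF g u (n-1, 0))"
definition DW :: "nat \<Rightarrow> (nat \<Rightarrow> nat) \<Rightarrow> int" where
  "DW n g = (\<Sum>v\<in>pg_vertices n. FF g v (n-1, g (n-1)))"
definition DDW :: "nat \<Rightarrow> (nat \<Rightarrow> nat) \<Rightarrow> int" where
  "DDW n g = (\<Sum>u\<in>pg_vertices n. int (dg n g u) * FF g u (n-1, g (n-1)))"

lemma FF_newV: "u \<in> pg_vertices (Suc m) \<Longrightarrow> FF g u (Suc m, b) = FF g u (m, g m) + 1 + int (cyc 0 b)"
  by (cases u) (simp add: FF_new pg_vertices_def del: FF.simps)

lemma sum_dg_Suc: assumes "g m < 5"
  shows "(\<Sum>u\<in>pg_vertices (Suc m). int (dg (Suc (Suc m)) g u) * X u)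
       = (\<Sum>u\<in>pg_vertices (Suc m). int (dg (Suc m) g u) * X u) + X (m, g m)"
proof -
  have wV: "(m, g m) \<in> pg_vertices (Suc m)" using assms by (simp add: pg_vertices_def)
  have "(\<Sum>u\<in>pg_vertices (Suc m). int (dg (Suc (Suc m)) g u) * X u)
      = (\<Sum>u\<in>pg_vertices (Suc m). int (dg (Suc m) g u) * X u + (if u = (m, g m) then X u else 0))"
  proof (rule sum.cong)
    fix u assume "u \<in> pg_vertices (Suc m)"
    then show "int (dg (Suc (Suc m)) g u) * X u = int (dg (Suc m) g u) * X u + (if u = (m, g m) then X u else 0)"
      by (cases u) (auto simp: pg_vertices_def dg_Suc algebra_simps)
  qed simp
  also have "\<dots> = (\<Sum>u\<in>pg_vertices (Suc m). int (dg (Suc m) g u) * X u) + X (m, g m)"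
    using wV by (simp add: sum.distrib sum.delta)
  finally show ?thesis .
qed

lemma card_int: "(\<Sum>u\<in>pg_vertices n. (1::int)) = 5 * int n"
  by (simp add: cardV)

lemma AA_Suc: assumes "g m < 5"
  shows "AA (Suc (Suc m)) g = DW (Suc m) g + 5 * int (Suc m) + 6"
proof -
  have "AA (Suc (Suc m)) g = (\<Sum>v\<in>pg_vertices (Suc m). FF g v (Suc m, 0)) + (\<Sum>j<5. FF g (Suc m, j) (Suc m, 0))"
    unfolding AA_def by (simp add: sumV_Suc[of _ "Suc m"])
  also have "(\<Sum>v\<in>pg_vertices (Suc m). FF g v (Suc m, 0)) = (\<Sum>v\<in>pg_vertices (Suc m). FF g v (m, g m) + 1)"
    by (rule sum.cong) (simp_all add: FF_newV)
  also have "\<dots> = DW (Suc m) g + 5 * int (Suc m)"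
    unfolding DW_def by (simp add: sum.distrib cardV)
  also have "(\<Sum>j<5. FF g (Suc m, j) (Suc m, 0)) = 6" using cyc_sum[of 0] by simp
  finally show ?thesis by simp
qed

lemma BB_Suc: assumes "\<forall>k\<le>m. g k < 5"
  shows "BB (Suc (Suc m)) g = DDW (Suc m) g + 12 * int (Suc m) + 11"
proof -
  have gm: "g m < 5" using assms by simp
  have "BB (Suc (Suc m)) g = (\<Sum>v\<in>pg_vertices (Suc m). int (dg (Suc (Suc m)) g v) * FF g v (Suc m, 0))
     + (\<Sum>j<5. int (dg (Suc (Suc m)) g (Suc m, j)) * FF g (Suc m, j) (Suc m, 0))"
    unfolding BB_def by (simp add: sumV_Suc[of _ "Suc m"])
  also have "(\<Sum>v\<in>pg_vertices (Suc m). int (dg (Suc (Suc m)) g v) * FF g v (Suc m, 0))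
       = (\<Sum>v\<in>pg_vertices (Suc m). int (dg (Suc (Suc m)) g v) * (FF g v (m, g m) + 1))"
    by (rule sum.cong) (simp_all add: FF_newV)
  also have "\<dots> = (\<Sum>v\<in>pg_vertices (Suc m). int (dg (Suc m) g v) * (FF g v (m, g m) + 1)) + 1"
    using sum_dg_Suc[of g m, OF gm] by simp
  also have "(\<Sum>v\<in>pg_vertices (Suc m). int (dg (Suc m) g v) * (FF g v (m, g m) + 1))
      = DDW (Suc m) g + (\<Sum>v\<in>pg_vertices (Suc m). int (dg (Suc m) g v))"
    unfolding DDW_def by (simp add: sum.distrib algebra_simps)
  also have "(\<Sum>v\<in>pg_vertices (Suc m). int (dg (Suc m) g v)) = 12 * int (Suc m) - 2"
    using sumdg[of m g] assms by simp
  also have "(\<Sum>j<5. int (dg (Suc (Suc m)) g (Suc m, j)) * FF g (Suc m, j) (Suc m, 0)) = 12"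
    by (simp add: sum5 dg_last cyc_def)
  finally show ?thesis by simp
qed



lemma FF_lastV: "v \<in> pg_vertices m \<Longrightarrow> FF g v (m, c) = FF g v (m, 0) + int (cyc 0 c)"
  by (cases v) (simp add: pg_vertices_def)

lemma DW_eq: assumes "g m < 5"
  shows "DW (Suc m) g = AA (Suc m) g + 5 * int m * int (cyc 0 (g m))"
proof -
  let ?S = "(\<Sum>v\<in>pg_vertices m. FF g v (m, 0))"
  have a: "(\<Sum>v\<in>pg_vertices m. FF g v (m, g m)) = (\<Sum>v\<in>pg_vertices m. FF g v (m, 0) + int (cyc 0 (g m)))"
    by (rule sum.cong) (simp_all add: FF_lastV[of _ m g "g m"])
  have b: "(\<Sum>j<5. FF g (m,j) (m, g m)) = 6" using cyc_sum[OF assms] by simp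
  have c: "(\<Sum>j<5. FF g (m,j) (m, 0)) = 6" using cyc_sum[of 0] by simp
  have "DW (Suc m) g = (\<Sum>v\<in>pg_vertices m. FF g v (m, g m)) + (\<Sum>j<5. FF g (m,j) (m, g m))"
    unfolding DW_def by (simp add: sumV_Suc)
  also have "\<dots> = ?S + 5 * int m * int (cyc 0 (g m)) + 6"
    unfolding a b by (simp add: sum.distrib cardV)
  finally have d: "DW (Suc m) g = ?S + 5 * int m * int (cyc 0 (g m)) + 6" .
  have "AA (Suc m) g = ?S + (\<Sum>j<5. FF g (m,j) (m, 0))"
    unfolding AA_def by (simp add: sumV_Suc)
  then have e: "AA (Suc m) g = ?S + 6" unfolding c .
  show ?thesis unfolding d e by simp
qed

lemma DDW_eq: assumes "\<forall>k\<le>m. g k < 5"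
  shows "DDW (Suc m) g = BB (Suc m) g + 12 * int m * int (cyc 0 (g m))"
proof -
  have gm: "g m < 5" using assms by simp
  let ?x = "int (cyc 0 (g m))"
  let ?i = "(if 1 \<le> m then 1 else 0) :: int"
  let ?S = "(\<Sum>v\<in>pg_vertices m. int (dg (Suc m) g v) * FF g v (m, 0))"
  have d5: "(\<Sum>j<5. int (dg (Suc m) g (m,j)) * X j) = 2 * (\<Sum>j<5. X j) + ?i * X 0" for X
    by (simp add: sum5 dg_last1 algebra_simps)
  have sd: "(\<Sum>v\<in>pg_vertices m. int (dg (Suc m) g v)) = 12 * int m - ?i"
  proof -
    have "(\<Sum>v\<in>pg_vertices (Suc m). int (dg (Suc m) g v)) = 12 * int (Suc m) - 2"
      using sumdg[of m g] assms by simp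
    moreover have "(\<Sum>j<5. int (dg (Suc m) g (m,j))) = 10 + ?i"
      using d5[of "\<lambda>_. 1"] by simp
    ultimately show ?thesis by (simp add: sumV_Suc)
  qed
  have a: "(\<Sum>v\<in>pg_vertices m. int (dg (Suc m) g v) * FF g v (m, g m))
     = ?S + ?x * (\<Sum>v\<in>pg_vertices m. int (dg (Suc m) g v))"
  proof -
    have "(\<Sum>v\<in>pg_vertices m. int (dg (Suc m) g v) * FF g v (m, g m))
       = (\<Sum>v\<in>pg_vertices m. int (dg (Suc m) g v) * FF g v (m, 0) + ?x * int (dg (Suc m) g v))"
      by (rule sum.cong) (simp_all add: FF_lastV[of _ m g "g m"] algebra_simps)
    then show ?thesis by (simp add: sum.distrib sum_distrib_left)
  qed
  have b: "(\<Sum>j<5. int (dg (Suc m) g (m,j)) * FF g (m,j) (m, g m)) = 12 + ?i * ?x"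
    using d5[of "\<lambda>j. FF g (m,j) (m, g m)"] cyc_sum[OF gm] by (simp add: cyc_sym)
  have c: "(\<Sum>j<5. int (dg (Suc m) g (m,j)) * FF g (m,j) (m, 0)) = 12"
    using d5[of "\<lambda>j. FF g (m,j) (m, 0)"] cyc_sum[of 0] by simp
  have d: "DDW (Suc m) g = (\<Sum>v\<in>pg_vertices m. int (dg (Suc m) g v) * FF g v (m, g m))
       + (\<Sum>j<5. int (dg (Suc m) g (m,j)) * FF g (m,j) (m, g m))"
    unfolding DDW_def by (simp add: sumV_Suc)
  have e: "BB (Suc m) g = ?S + (\<Sum>j<5. int (dg (Suc m) g (m,j)) * FF g (m,j) (m, 0))"
    unfolding BB_def by (simp add: sumV_Suc)
  show ?thesis unfolding d e a b c sd by (simp add: algebra_simps)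
qed



lemma cyc_sum': assumes "a < 5" shows "(\<Sum>b<5. int (cyc a b)) = 6"
  using cyc_sum[OF assms] by (simp add: cyc_sym)

lemma TT_Suc: assumes "\<forall>k\<le>m. g k < 5"
  shows "TT (Suc (Suc m)) g = TT (Suc m) g + 12 * DW (Suc m) g + 5 * DDW (Suc m) g + 247 * int (Suc m) + 55"
proof -
  have gm: "g m < 5" using assms by simp
  let ?N = "Suc m"
  let ?d = "\<lambda>u. int (dg (Suc ?N) g u)"
  let ?R = "\<lambda>u. \<Sum>v\<in>pg_vertices ?N. FF g u v"
  let ?Q = "\<lambda>u. \<Sum>b<5. FF g u (?N, b)"
  have s1: "TT (Suc ?N) g = (\<Sum>u\<in>pg_vertices (Suc ?N). ?d u * (?R u + ?Q u))"
    unfolding TT_def by (simp add: sumV_Suc[of _ ?N] distrib_left sum_distrib_left)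
  also have "\<dots> = (\<Sum>u\<in>pg_vertices ?N. ?d u * (?R u + ?Q u)) + (\<Sum>a<5. ?d (?N,a) * (?R (?N,a) + ?Q (?N,a)))"
    by (simp add: sumV_Suc[of _ ?N])
  finally have s2: "TT (Suc ?N) g = (\<Sum>u\<in>pg_vertices ?N. ?d u * (?R u + ?Q u)) + (\<Sum>a<5. ?d (?N,a) * (?R (?N,a) + ?Q (?N,a)))" .
  have q: "u \<in> pg_vertices ?N \<Longrightarrow> ?Q u = 5 * FF g u (m, g m) + 11" for u
    by (simp add: FF_newV sum5 cyc_def)
  have p1: "(\<Sum>u\<in>pg_vertices ?N. ?d u * (?R u + ?Q u)) = (\<Sum>u\<in>pg_vertices ?N. ?d u * (?R u + 5 * FF g u (m, g m) + 11))"
    by (rule sum.cong) (simp_all add: q)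
  also have "\<dots> = (\<Sum>u\<in>pg_vertices ?N. int (dg ?N g u) * (?R u + 5 * FF g u (m, g m) + 11)) + (?R (m, g m) + 11)"
    using sum_dg_Suc[of g m, OF gm] by simp
  also have "(\<Sum>u\<in>pg_vertices ?N. int (dg ?N g u) * (?R u + 5 * FF g u (m, g m) + 11))
     = TT ?N g + 5 * DDW ?N g + 11 * (\<Sum>u\<in>pg_vertices ?N. int (dg ?N g u))"
    unfolding TT_def DDW_def by (simp add: sum.distrib sum_distrib_left algebra_simps)
  also have "(\<Sum>u\<in>pg_vertices ?N. int (dg ?N g u)) = 12 * int ?N - 2"
    using sumdg[of m g] assms by simp
  also have "?R (m, g m) = DW ?N g" unfolding DW_def by (simp add: FF_sym[of g "(m, g m)"])
  finally have A: "(\<Sum>u\<in>pg_vertices ?N. ?d u * (?R u + ?Q u)) = TT ?N g + 5 * DDW ?N g + 11 * (12 * int ?N - 2) + (DW ?N g + 11)" .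
  have r: "?R (?N,a) = DW ?N g + 5 * int ?N * (1 + int (cyc 0 a))" for a
  proof -
    have "?R (?N,a) = (\<Sum>v\<in>pg_vertices ?N. FF g v (m, g m) + 1 + int (cyc 0 a))"
      by (rule sum.cong) (simp_all add: FF_sym[of g "(?N,a)"] FF_newV)
    then show ?thesis unfolding DW_def by (simp add: sum.distrib cardV algebra_simps)
  qed
  have qa: "a < 5 \<Longrightarrow> ?Q (?N,a) = 6" for a using cyc_sum[of a] by (simp add: cyc_sym)
  have B: "(\<Sum>a<5. ?d (?N,a) * (?R (?N,a) + ?Q (?N,a))) = (\<Sum>a<5. ?d (?N,a) * (DW ?N g + 5 * int ?N * (1 + int (cyc 0 a)) + 6))"
    by (rule sum.cong) (simp_all add: r cyc_sum')
  also have "\<dots> = 11 * DW ?N g + 115 * int ?N + 66"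
    by (simp add: sum5 dg_last cyc_def algebra_simps)
  finally have B': "(\<Sum>a<5. ?d (?N,a) * (?R (?N,a) + ?Q (?N,a))) = 11 * DW ?N g + 115 * int ?N + 66" .
  show ?thesis unfolding s2 A B' by (simp add: algebra_simps)
qed



lemma LL_cong: "(\<forall>k<j. g k = g' k) \<Longrightarrow> LL g j = LL g' j"
  unfolding LL_def by (rule sum.cong) auto

lemma FF_cong: assumes "\<forall>k. k + 1 < n \<longrightarrow> g k = g' k" "u \<in> pg_vertices n" "v \<in> pg_vertices n"
  shows "FF g u v = FF g' u v"
proof -
  obtain i a j b where e: "u = (i,a)" "v = (j,b)" by (cases u; cases v)
  have r: "i < n" "j < n" using assms e by (auto simp: pg_vertices_def)
  have l1: "LL g i = LL g' i" "LL g j = LL g' j" using assms(1) r by (auto intro!: LL_cong)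
  have "i < j \<Longrightarrow> g i = g' i" "j < i \<Longrightarrow> g j = g' j" using assms(1) r by auto
  then show ?thesis unfolding e using l1 by auto
qed

lemma dg_cong: assumes "\<forall>k. k + 1 < n \<longrightarrow> g k = g' k"
  shows "dg n g u = dg n g' u"
  using assms unfolding dg_def by auto

lemma TT_cong: assumes "\<forall>k. k + 1 < n \<longrightarrow> g k = g' k" shows "TT n g = TT n g'"
  unfolding TT_def using FF_cong[OF assms] dg_cong[OF assms] by (intro sum.cong refl) simp
lemma AA_cong: assumes "\<forall>k. k + 1 < n \<longrightarrow> g k = g' k" "n \<ge> 1" shows "AA n g = AA n g'"
proof -
  have "(n-1, 0) \<in> pg_vertices n" using assms(2) by (simp add: pg_vertices_def)
  then show ?thesis unfolding AA_def using FF_cong[OF assms(1)] by (intro sum.cong refl) simp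
qed
lemma BB_cong: assumes "\<forall>k. k + 1 < n \<longrightarrow> g k = g' k" "n \<ge> 1" shows "BB n g = BB n g'"
proof -
  have "(n-1, 0) \<in> pg_vertices n" using assms(2) by (simp add: pg_vertices_def)
  then show ?thesis unfolding BB_def using FF_cong[OF assms(1)] dg_cong[OF assms(1)] by (intro sum.cong refl) simp
qed

lemma ocs_app: assumes "length cs = n - 2" "n \<ge> 2"
  shows "\<forall>k. k + 1 < n \<longrightarrow> ocs (cs @ [c]) k = ocs cs k" "ocs (cs @ [c]) (n - 1) = c"
proof -
  show "\<forall>k. k + 1 < n \<longrightarrow> ocs (cs @ [c]) k = ocs cs k"
    using assms by (auto simp: ocs_def nth_append)
  have "n - 1 - 1 = length cs" using assms by simp
  then show "ocs (cs @ [c]) (n - 1) = c" using assms by (simp add: ocs_def nth_append)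
qed

lemma schultz_eq: assumes "cs \<in> choice_seqs n"
  shows "pg_schultz n cs = real_of_int (TT n (ocs cs))"
proof -
  let ?g = "ocs cs"
  let ?h = "\<lambda>u v. (int (dg n ?g u) + int (dg n ?g v)) * FF ?g u v"
  have pt: "u \<in> pg_vertices n \<Longrightarrow> v \<in> pg_vertices n \<Longrightarrow>
     real ((pg_deg n cs u + pg_deg n cs v) * pg_dist n cs u v) = real_of_int (?h u v)" for u v
    using dist_eq[OF assms] deg_eq[OF assms] FF_nonneg[of ?g u v] by simp
  have inner: "u \<in> pg_vertices n \<Longrightarrow> (\<Sum>v\<in>pg_vertices n - {u}. real ((pg_deg n cs u + pg_deg n cs v) * pg_dist n cs u v))
      = real_of_int (\<Sum>v\<in>pg_vertices n. ?h u v)" for u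
  proof -
    assume u: "u \<in> pg_vertices n"
    have "(\<Sum>v\<in>pg_vertices n. ?h u v) = ?h u u + (\<Sum>v\<in>pg_vertices n - {u}. ?h u v)"
      using u by (simp add: sum.remove)
    then have "(\<Sum>v\<in>pg_vertices n. ?h u v) = (\<Sum>v\<in>pg_vertices n - {u}. ?h u v)" by simp
    moreover have "(\<Sum>v\<in>pg_vertices n - {u}. real ((pg_deg n cs u + pg_deg n cs v) * pg_dist n cs u v))
       = (\<Sum>v\<in>pg_vertices n - {u}. real_of_int (?h u v))"
      using u pt by (intro sum.cong) auto
    ultimately show ?thesis by simp
  qed
  have "pg_schultz n cs = 1/2 * real_of_int (\<Sum>u\<in>pg_vertices n. \<Sum>v\<in>pg_vertices n. ?h u v)"
    unfolding pg_schultz_def using inner by (simp cong: sum.cong)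
  also have "(\<Sum>u\<in>pg_vertices n. \<Sum>v\<in>pg_vertices n. ?h u v) = TT n ?g + (\<Sum>u\<in>pg_vertices n. \<Sum>v\<in>pg_vertices n. int (dg n ?g v) * FF ?g u v)"
    unfolding TT_def by (simp add: sum.distrib algebra_simps)
  also have "(\<Sum>u\<in>pg_vertices n. \<Sum>v\<in>pg_vertices n. int (dg n ?g v) * FF ?g u v) = TT n ?g"
    unfolding TT_def by (subst sum.swap) (simp add: FF_sym[of ?g])
  finally show ?thesis by simp
qed



definition Exq :: "real \<Rightarrow> nat \<Rightarrow> (nat list \<Rightarrow> real) \<Rightarrow> real" where
  "Exq p n f = (\<Sum>cs\<in>choice_seqs n. (\<Prod>c\<leftarrow>cs. choice_prob p c) * f cs)"

lemma cs12: "choice_seqs (Suc 0) = {[]}" "choice_seqs 2 = {[]}" "choice_seqs (Suc (Suc 0)) = {[]}"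
  by (auto simp: choice_seqs_def)

lemma choice_seqs_Suc: assumes "n \<ge> 2"
  shows "choice_seqs (Suc n) = (\<lambda>(cs,c). cs @ [c]) ` (choice_seqs n \<times> {1,2,3,4})"
proof
  show "choice_seqs (Suc n) \<subseteq> (\<lambda>(cs,c). cs @ [c]) ` (choice_seqs n \<times> {1,2,3,4})"
  proof
    fix xs assume xs: "xs \<in> choice_seqs (Suc n)"
    then have l: "length xs = n - 1" "set xs \<subseteq> {1,2,3,4}" by (auto simp: choice_seqs_def)
    then have "xs \<noteq> []" using assms by auto
    then have e: "xs = butlast xs @ [last xs]" by simp
    have "butlast xs \<in> choice_seqs n" using l assms by (auto simp: choice_seqs_def dest: in_set_butlastD)
    moreover have "last xs \<in> {1,2,3,4}" using l \<open>xs \<noteq> []\<close> last_in_set by blast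
    ultimately show "xs \<in> (\<lambda>(cs,c). cs @ [c]) ` (choice_seqs n \<times> {1,2,3,4})"
      using e by (intro image_eqI[of _ _ "(butlast xs, last xs)"]) auto
  qed
next
  show "(\<lambda>(cs,c). cs @ [c]) ` (choice_seqs n \<times> {1,2,3,4}) \<subseteq> choice_seqs (Suc n)"
    using assms by (auto simp: choice_seqs_def)
qed

lemma fin_cs: "finite (choice_seqs n)"
proof -
  have "choice_seqs n \<subseteq> {xs. set xs \<subseteq> {1,2,3,4} \<and> length xs = n - 2}" by (auto simp: choice_seqs_def)
  then show ?thesis using finite_lists_length_eq[of "{1,2,3,4::nat}" "n-2"] finite_subset by blast
qed

lemma Exq_Suc: assumes "n \<ge> 2"
  shows "Exq p (Suc n) f = Exq p n (\<lambda>cs. \<Sum>c\<in>{1,2,3,4}. choice_prob p c * f (cs @ [c]))"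
proof -
  have inj: "inj_on (\<lambda>(cs,c). cs @ [c]) (choice_seqs n \<times> {1,2,3,4::nat})"
    by (auto simp: inj_on_def)
  have "Exq p (Suc n) f = (\<Sum>x\<in>choice_seqs n \<times> {1,2,3,4}. (\<Prod>c\<leftarrow>(fst x @ [snd x]). choice_prob p c) * f (fst x @ [snd x]))"
    unfolding Exq_def choice_seqs_Suc[OF assms] by (subst sum.reindex[OF inj]) (simp add: case_prod_beta)
  also have "\<dots> = (\<Sum>cs\<in>choice_seqs n. \<Sum>c\<in>{1,2,3,4}. (\<Prod>c\<leftarrow>(cs @ [c]). choice_prob p c) * f (cs @ [c]))"
    by (subst sum.cartesian_product) (simp add: case_prod_beta)
  also have "\<dots> = Exq p n (\<lambda>cs. \<Sum>c\<in>{1,2,3,4}. choice_prob p c * f (cs @ [c]))"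
    unfolding Exq_def by (simp add: sum_distrib_left algebra_simps)
  finally show ?thesis .
qed

lemma Exq_cong: "(\<And>cs. cs \<in> choice_seqs n \<Longrightarrow> f cs = g cs) \<Longrightarrow> Exq p n f = Exq p n g"
  unfolding Exq_def by (intro sum.cong) auto

lemma Exq_add: "Exq p n (\<lambda>cs. f cs + g cs) = Exq p n f + Exq p n g"
  unfolding Exq_def by (simp add: sum.distrib algebra_simps)
lemma Exq_mult: "Exq p n (\<lambda>cs. a * f cs) = a * Exq p n f"
  unfolding Exq_def by (simp add: sum_distrib_left algebra_simps)

lemma sum_c: "(\<Sum>c\<in>{1,2,3,4::nat}. choice_prob p c * (X + Y * real (cyc 0 c))) = X + Y * (2 - p)"
  by (simp add: choice_prob_def cyc_def algebra_simps)

lemma Exq_one: "n \<ge> 1 \<Longrightarrow> Exq p n (\<lambda>_. 1) = 1"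
proof (induction n rule: nat_induct_at_least)
  case base then show ?case by (simp add: Exq_def cs12)
next
  case (Suc n)
  show ?case
  proof (cases "n = 1")
    case True then show ?thesis by (simp add: Exq_def cs12)
  next
    case False
    then have "n \<ge> 2" using Suc by simp
    then show ?thesis using Exq_Suc[of n p "\<lambda>_. 1"] sum_c[of p 1 0] Suc.IH by simp
  qed
qed

lemma Exq_const: "n \<ge> 1 \<Longrightarrow> Exq p n (\<lambda>_. k) = k"
  using Exq_mult[of p n k "\<lambda>_. 1"] Exq_one[of n p] by simp



lemma rec3: assumes "\<forall>k\<le>m. g k < 5"
  shows "TT (Suc (Suc m)) g = TT (Suc m) g + 12 * AA (Suc m) g + 5 * BB (Suc m) g + 120 * int m * int (cyc 0 (g m)) + 247 * int (Suc m) + 55"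
    "AA (Suc (Suc m)) g = AA (Suc m) g + 5 * int m * int (cyc 0 (g m)) + 5 * int (Suc m) + 6"
    "BB (Suc (Suc m)) g = BB (Suc m) g + 12 * int m * int (cyc 0 (g m)) + 12 * int (Suc m) + 11"
proof -
  have gm: "g m < 5" using assms by simp
  show "TT (Suc (Suc m)) g = TT (Suc m) g + 12 * AA (Suc m) g + 5 * BB (Suc m) g + 120 * int m * int (cyc 0 (g m)) + 247 * int (Suc m) + 55"
    using TT_Suc[OF assms] DW_eq[of g m, OF gm] DDW_eq[OF assms] by (simp add: algebra_simps)
  show "AA (Suc (Suc m)) g = AA (Suc m) g + 5 * int m * int (cyc 0 (g m)) + 5 * int (Suc m) + 6"
    using AA_Suc[of g m, OF gm] DW_eq[of g m, OF gm] by (simp add: algebra_simps)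
  show "BB (Suc (Suc m)) g = BB (Suc m) g + 12 * int m * int (cyc 0 (g m)) + 12 * int (Suc m) + 11"
    using BB_Suc[OF assms] DDW_eq[OF assms] by (simp add: algebra_simps)
qed

lemma step_gen: assumes "n \<ge> 2" "\<And>cs c. cs \<in> choice_seqs n \<Longrightarrow> c \<in> {1,2,3,4} \<Longrightarrow> F (cs @ [c]) = X cs + Y * real (cyc 0 c)"
  shows "Exq p (Suc n) F = Exq p n X + Y * (2 - p)"
proof -
  have "Exq p (Suc n) F = Exq p n (\<lambda>cs. \<Sum>c\<in>{1,2,3,4}. choice_prob p c * F (cs @ [c]))"
    using Exq_Suc[OF assms(1)] .
  also have "\<dots> = Exq p n (\<lambda>cs. X cs + Y * (2 - p))"
  proof (rule Exq_cong)
    fix cs assume cs: "cs \<in> choice_seqs n"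
    have "(\<Sum>c\<in>{1,2,3,4}. choice_prob p c * F (cs @ [c])) = (\<Sum>c\<in>{1,2,3,4::nat}. choice_prob p c * (X cs + Y * real (cyc 0 c)))"
      using assms(2)[OF cs] by (intro sum.cong) auto
    then show "(\<Sum>c\<in>{1,2,3,4}. choice_prob p c * F (cs @ [c])) = X cs + Y * (2 - p)" using sum_c by simp
  qed
  also have "\<dots> = Exq p n X + Y * (2 - p)" using Exq_add[of p n X "\<lambda>_. Y * (2 - p)"] Exq_const[of n p] assms(1) by simp
  finally show ?thesis .
qed

definition cT :: "real \<Rightarrow> nat \<Rightarrow> real" where
  "cT p n = (60 - 20 * p) * real n ^ 3 + (60 * p + 7) * real n ^ 2 - (40 * p + 7) * real n"
definition cA :: "real \<Rightarrow> nat \<Rightarrow> real" where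
  "cA p n = 6 * real n + 5/2 * real n * (real n - 1) + 5/2 * (2 - p) * (real n - 1) * (real n - 2)"
definition cB :: "real \<Rightarrow> nat \<Rightarrow> real" where
  "cB p n = 12 + 6 * real n * (real n - 1) + 11 * (real n - 1) + 6 * (2 - p) * (real n - 1) * (real n - 2)"

lemma base1: "TT (Suc 0) g = 60" "AA (Suc 0) g = 6" "BB (Suc 0) g = 12"
  by (simp_all add: TT_def AA_def BB_def sumV sum5 dg_def cyc_def)

lemma Exq1: "Exq p (Suc 0) f = f []" "Exq p (Suc (Suc 0)) f = f []" by (simp_all add: Exq_def cs12)

lemma main: "n \<ge> 1 \<Longrightarrow> Exq p n (\<lambda>cs. real_of_int (TT n (ocs cs))) = cT p n
   \<and> Exq p n (\<lambda>cs. real_of_int (AA n (ocs cs))) = cA p n \<and> Exq p n (\<lambda>cs. real_of_int (BB n (ocs cs))) = cB p n"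
proof (induction n rule: nat_induct_at_least)
  case base then show ?case by (simp add: Exq1 base1 cT_def cA_def cB_def)
next
  case (Suc n)
  then obtain m where m: "n = Suc m" by (cases n) auto
  show ?case
  proof (cases "m = 0")
    case True
    have g: "\<forall>k\<le>0. ocs [] k < 5" by (simp add: ocs_def)
    show ?thesis using rec3[OF g] Suc.IH unfolding m True
      by (simp add: Exq1 base1 cT_def cA_def cB_def ocs_def)
  next
    case False
    have n2: "n \<ge> 2" using False m by simp
    have facts: "\<forall>k\<le>m. ocs (cs @ [c]) k < 5" "ocs (cs @ [c]) m = c"
        "\<forall>k. k + 1 < n \<longrightarrow> ocs (cs @ [c]) k = ocs cs k"
      if cs: "cs \<in> choice_seqs n" "c \<in> {1,2,3,4}" for cs c
    proof -
      have "cs @ [c] \<in> choice_seqs (Suc n)" using cs n2 by (auto simp: choice_seqs_def)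
      from valid_ocs[OF this] show "\<forall>k\<le>m. ocs (cs @ [c]) k < 5" unfolding valid_def m by auto
      have l: "length cs = n - 2" using cs by (simp add: choice_seqs_def)
      show "ocs (cs @ [c]) m = c" using ocs_app(2)[OF l n2] m by simp
      show "\<forall>k. k + 1 < n \<longrightarrow> ocs (cs @ [c]) k = ocs cs k" using ocs_app(1)[OF l n2] .
    qed
    let ?x = "\<lambda>c. real (cyc 0 c)"
    have T: "Exq p (Suc n) (\<lambda>cs. real_of_int (TT (Suc n) (ocs cs)))
       = Exq p n (\<lambda>cs. real_of_int (TT n (ocs cs)) + 12 * real_of_int (AA n (ocs cs)) + 5 * real_of_int (BB n (ocs cs)) + (247 * real n + 55)) + 120 * real m * (2 - p)"
    proof (rule step_gen[OF n2])
      fix cs c assume a: "cs \<in> choice_seqs n" "c \<in> {1,2,3,4::nat}"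
      note f = facts[OF a]
      show "real_of_int (TT (Suc n) (ocs (cs @ [c]))) = real_of_int (TT n (ocs cs)) + 12 * real_of_int (AA n (ocs cs)) + 5 * real_of_int (BB n (ocs cs)) + (247 * real n + 55) + 120 * real m * ?x c"
        using rec3(1)[OF f(1)] f(2) TT_cong[OF f(3)] AA_cong[OF f(3)] BB_cong[OF f(3)] unfolding m by simp
    qed
    have A: "Exq p (Suc n) (\<lambda>cs. real_of_int (AA (Suc n) (ocs cs)))
       = Exq p n (\<lambda>cs. real_of_int (AA n (ocs cs)) + (5 * real n + 6)) + 5 * real m * (2 - p)"
    proof (rule step_gen[OF n2])
      fix cs c assume a: "cs \<in> choice_seqs n" "c \<in> {1,2,3,4::nat}"
      note f = facts[OF a]
      show "real_of_int (AA (Suc n) (ocs (cs @ [c]))) = real_of_int (AA n (ocs cs)) + (5 * real n + 6) + 5 * real m * ?x c"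
        using rec3(2)[OF f(1)] f(2) AA_cong[OF f(3)] unfolding m by simp
    qed
    have B: "Exq p (Suc n) (\<lambda>cs. real_of_int (BB (Suc n) (ocs cs)))
       = Exq p n (\<lambda>cs. real_of_int (BB n (ocs cs)) + (12 * real n + 11)) + 12 * real m * (2 - p)"
    proof (rule step_gen[OF n2])
      fix cs c assume a: "cs \<in> choice_seqs n" "c \<in> {1,2,3,4::nat}"
      note f = facts[OF a]
      show "real_of_int (BB (Suc n) (ocs (cs @ [c]))) = real_of_int (BB n (ocs cs)) + (12 * real n + 11) + 12 * real m * ?x c"
        using rec3(3)[OF f(1)] f(2) BB_cong[OF f(3)] unfolding m by simp
    qed
    have n1: "n \<ge> 1" using Suc by simp
    note lin = Exq_add Exq_mult Exq_const[OF n1]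
    have T': "Exq p (Suc n) (\<lambda>cs. real_of_int (TT (Suc n) (ocs cs))) = cT p n + 12 * cA p n + 5 * cB p n + (247 * real n + 55) + 120 * real m * (2 - p)"
      unfolding T using Suc.IH by (simp add: lin)
    have A': "Exq p (Suc n) (\<lambda>cs. real_of_int (AA (Suc n) (ocs cs))) = cA p n + (5 * real n + 6) + 5 * real m * (2 - p)"
      unfolding A using Suc.IH by (simp add: lin)
    have B': "Exq p (Suc n) (\<lambda>cs. real_of_int (BB (Suc n) (ocs cs))) = cB p n + (12 * real n + 11) + 12 * real m * (2 - p)"
      unfolding B using Suc.IH by (simp add: lin)
    show ?thesis unfolding T' A' B' unfolding m
      by (simp add: cT_def cA_def cB_def field_simps power2_eq_square power3_eq_cube)
  qed
qed


theorem theorem2p2: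
  fixes p1 :: real and n :: nat
  assumes "0 \<le> p1" and "p1 \<le> 1" and "n \<ge> 1"
  shows "expected_schultz p1 n
           = (60 - 20 * p1) * real n ^ 3 + (60 * p1 + 7) * real n ^ 2 - (40 * p1 + 7) * real n"
proof -
  have "expected_schultz p1 n = Exq p1 n (\<lambda>cs. pg_schultz n cs)"
    unfolding expected_schultz_def Exq_def ..
  also have "\<dots> = Exq p1 n (\<lambda>cs. real_of_int (TT n (ocs cs)))"
    by (rule Exq_cong) (rule schultz_eq)
  also have "\<dots> = cT p1 n" using main[OF assms(3)] by simp
  finally show ?thesis unfolding cT_def .
qed

end
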